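(* There is a function $C(t,\epsilon)$ such that the following holds for every positive integer $t$ and every $\epsilon\in(0,1)$: let $G$ be a connected balanced bipartite graph with parts $X,Y$ each of order $n$, with $\delta(G)\geq 3C(t,\epsilon)$ and with no induced $S_{t,t}$. Then for any vertices $x,x'\in X\setminus U_X(\epsilon)$ we have $|N(x)\cap N(x')|\geq (1-10\epsilon)\Delta_X$.
   Context: For positive integers $a,b$, the biclaw $S_{a,b}$ is the graph with vertex set $\{x,x_1,\dots,x_a,y,y_1,\dots,y_b\}$ and edges $xy$, $xy_1,\dots,xy_b$, $yx_1,\dots,yx_a$; "no induced $S_{t,t}$" means no induced subgraph isomorphic to $S_{t,t}$. For a bipartite graph with parts $X,Y$, $\Delta_X=\max_{x\in X} d(x)$ and $U_X(\epsilon)=\{x\in X: d(x)\leq (1-\epsilon)\Delta_X\}$. $N(v)$ is the neighbourhood and $\delta(G)$ the minimum degree. *)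

theory Defs
  imports Complex_Main
begin

text \<open>A simple graph is given by a vertex set V and a symmetric irreflexive
edge relation E. A bipartite graph with parts X, Y has V = X \<union> Y.\<close>

definition bipartite_graph :: "'a set \<Rightarrow> 'a set \<Rightarrow> ('a \<Rightarrow> 'a \<Rightarrow> bool) \<Rightarrow> bool" where
  "bipartite_graph X Y E \<longleftrightarrow> finite X \<and> finite Y \<and> X \<inter> Y = {} \<and>
     (\<forall>u v. E u v \<longrightarrow> E v u) \<and>
     (\<forall>u v. E u v \<longrightarrow> (u \<in> X \<and> v \<in> Y) \<or> (u \<in> Y \<and> v \<in> X))"

definition nbhd :: "'a set \<Rightarrow> ('a \<Rightarrow> 'a \<Rightarrow> bool) \<Rightarrow> 'a \<Rightarrow> 'a set" where
  "nbhd V E v = {u \<in> V. E v u}"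

definition degree :: "'a set \<Rightarrow> ('a \<Rightarrow> 'a \<Rightarrow> bool) \<Rightarrow> 'a \<Rightarrow> nat" where
  "degree V E v = card (nbhd V E v)"

definition min_degree :: "'a set \<Rightarrow> ('a \<Rightarrow> 'a \<Rightarrow> bool) \<Rightarrow> nat" where
  "min_degree V E = Min (degree V E ` V)"

definition max_degree_on :: "'a set \<Rightarrow> ('a \<Rightarrow> 'a \<Rightarrow> bool) \<Rightarrow> 'a set \<Rightarrow> nat" where
  "max_degree_on V E X = Max (degree V E ` X)"

definition U_set :: "'a set \<Rightarrow> ('a \<Rightarrow> 'a \<Rightarrow> bool) \<Rightarrow> 'a set \<Rightarrow> real \<Rightarrow> 'a set" where
  "U_set V E X \<epsilon> = {x \<in> X. real (degree V E x) \<le> (1 - \<epsilon>) * real (max_degree_on V E X)}"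

definition connected_graph :: "'a set \<Rightarrow> ('a \<Rightarrow> 'a \<Rightarrow> bool) \<Rightarrow> bool" where
  "connected_graph V E \<longleftrightarrow>
     (\<forall>u\<in>V. \<forall>v\<in>V. (\<lambda>a b. a \<in> V \<and> b \<in> V \<and> E a b)\<^sup>*\<^sup>* u v)"

text \<open>Vertices of the biclaw S_{a,b}: x, y, x_1..x_a, y_1..y_b (indices 0-based).\<close>
datatype bcv = BX | BY | BXi nat | BYi nat

definition biclaw_verts :: "nat \<Rightarrow> nat \<Rightarrow> bcv set" where
  "biclaw_verts a b = {BX, BY} \<union> BXi ` {..<a} \<union> BYi ` {..<b}"

fun biclaw_edge :: "bcv \<Rightarrow> bcv \<Rightarrow> bool" where
  "biclaw_edge BX BY = True"
| "biclaw_edge BY BX = True"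
| "biclaw_edge BX (BYi _) = True"
| "biclaw_edge (BYi _) BX = True"
| "biclaw_edge BY (BXi _) = True"
| "biclaw_edge (BXi _) BY = True"
| "biclaw_edge _ _ = False"

definition has_induced_biclaw :: "'a set \<Rightarrow> ('a \<Rightarrow> 'a \<Rightarrow> bool) \<Rightarrow> nat \<Rightarrow> nat \<Rightarrow> bool" where
  "has_induced_biclaw V E a b \<longleftrightarrow>
     (\<exists>f. inj_on f (biclaw_verts a b) \<and> f ` biclaw_verts a b \<subseteq> V \<and>
        (\<forall>u\<in>biclaw_verts a b. \<forall>v\<in>biclaw_verts a b. E (f u) (f v) \<longleftrightarrow> biclaw_edge u v))"

end

theory Submission
  imports Defs
begin
lemma bip_sym: "bipartite_graph X Y E \<Longrightarrow> E u v \<Longrightarrow> E v u"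
  unfolding bipartite_graph_def by blast

lemma bip_in: "bipartite_graph X Y E \<Longrightarrow> E u v \<Longrightarrow> u \<in> X \<union> Y \<and> v \<in> X \<union> Y"
  unfolding bipartite_graph_def by blast

lemma bip_irrefl: "bipartite_graph X Y E \<Longrightarrow> \<not> E u u"
  unfolding bipartite_graph_def by blast

lemma bip_same_side: "bipartite_graph X Y E \<Longrightarrow> E p b \<Longrightarrow> E q b \<Longrightarrow> \<not> E p q"
  unfolding bipartite_graph_def by blast

lemma bip_no_common: "bipartite_graph X Y E \<Longrightarrow> E a b \<Longrightarrow> E w a \<Longrightarrow> \<not> E w b"
  unfolding bipartite_graph_def by blast

lemma biclaw_build:
  assumes bip: "bipartite_graph X Y E"
    and ab: "E a b"
    and cA: "card A = t" and cB: "card B = t"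
    and A: "A \<subseteq> {v. E b v}" and B: "B \<subseteq> {v. E a v}"
    and aA: "a \<notin> A" and bB: "b \<notin> B"
    and noE: "\<forall>p\<in>A. \<forall>q\<in>B. \<not> E p q"
    and tpos: "t > 0"
  shows "has_induced_biclaw (X \<union> Y) E t t"
proof -
  have fA: "finite A" using cA tpos card_ge_0_finite by blast
  have fB: "finite B" using cB tpos card_ge_0_finite by blast
  obtain g where g: "bij_betw g {0..<t} A" using ex_bij_betw_nat_finite[OF fA] cA by blast
  obtain h where h: "bij_betw h {0..<t} B" using ex_bij_betw_nat_finite[OF fB] cB by blast
  define f where "f = (\<lambda>v. case v of BX \<Rightarrow> a | BY \<Rightarrow> b | BXi i \<Rightarrow> g i | BYi i \<Rightarrow> h i)"
  have gA: "i < t \<Longrightarrow> g i \<in> A" for i using g unfolding bij_betw_def by auto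
  have hB: "i < t \<Longrightarrow> h i \<in> B" for i using h unfolding bij_betw_def by auto
  have ginj: "i < t \<Longrightarrow> j < t \<Longrightarrow> g i = g j \<Longrightarrow> i = j" for i j
    using g unfolding bij_betw_def inj_on_def by auto
  have hinj: "i < t \<Longrightarrow> j < t \<Longrightarrow> h i = h j \<Longrightarrow> i = j" for i j
    using h unfolding bij_betw_def inj_on_def by auto
  have Esym: "E u v \<Longrightarrow> E v u" for u v using bip_sym[OF bip] by blast
  have Eba: "E b a" using bip_sym[OF bip ab] .
  have EbA: "p \<in> A \<Longrightarrow> E b p" for p using A by auto
  have EaB: "q \<in> B \<Longrightarrow> E a q" for q using B by auto
  have nAA: "p \<in> A \<Longrightarrow> p' \<in> A \<Longrightarrow> \<not> E p p'" for p p'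
    using bip_same_side[OF bip bip_sym[OF bip EbA] bip_sym[OF bip EbA]] by blast
  have nBB: "q \<in> B \<Longrightarrow> q' \<in> B \<Longrightarrow> \<not> E q q'" for q q'
    using bip_same_side[OF bip bip_sym[OF bip EaB] bip_sym[OF bip EaB]] by blast
  have naA: "p \<in> A \<Longrightarrow> \<not> E a p" for p
    using bip_same_side[OF bip ab bip_sym[OF bip EbA]] by blast
  have nbB: "q \<in> B \<Longrightarrow> \<not> E b q" for q
    using bip_same_side[OF bip Eba bip_sym[OF bip EaB]] by blast
  have aB: "a \<notin> B" using EaB bip_irrefl[OF bip] by blast
  have bA: "b \<notin> A" using EbA bip_irrefl[OF bip] by blast
  have ab_ne: "a \<noteq> b" using ab bip_irrefl[OF bip] by blast
  have AB: "p \<in> A \<Longrightarrow> p \<notin> B" for p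
  proof
    assume pA: "p \<in> A" and pB: "p \<in> B"
    have "E p a" using Esym[OF EaB[OF pB]] .
    hence "\<not> E p b" using bip_no_common[OF bip ab] by blast
    thus False using Esym[OF EbA[OF pA]] by blast
  qed
  have inV: "E u v \<Longrightarrow> u \<in> X \<union> Y" for u v using bip_in[OF bip] by blast
  have F1: "i < t \<Longrightarrow> E b (g i) \<and> E (g i) b \<and> \<not> E a (g i) \<and> \<not> E (g i) a" for i
    using gA[of i] EbA[of "g i"] Esym[of b "g i"] naA[of "g i"] Esym[of "g i" a] by blast
  have F2: "i < t \<Longrightarrow> E a (h i) \<and> E (h i) a \<and> \<not> E b (h i) \<and> \<not> E (h i) b" for i
    using hB[of i] EaB[of "h i"] Esym[of a "h i"] nbB[of "h i"] Esym[of "h i" b] by blast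
  have F3: "i < t \<Longrightarrow> j < t \<Longrightarrow> \<not> E (g i) (g j) \<and> \<not> E (h i) (h j) \<and> \<not> E (g i) (h j) \<and> \<not> E (h j) (g i)" for i j
    using gA[of i] gA[of j] hB[of i] hB[of j] nAA nBB noE Esym[of "h j" "g i"] by blast
  have F4: "\<not> E a a \<and> \<not> E b b" using bip_irrefl[OF bip] by blast
  have F5: "i < t \<Longrightarrow> g i \<noteq> a \<and> g i \<noteq> b \<and> h i \<noteq> a \<and> h i \<noteq> b" for i
    using gA[of i] hB[of i] aA aB bA bB by metis
  have F6: "i < t \<Longrightarrow> j < t \<Longrightarrow> g i \<noteq> h j" for i j using gA[of i] hB[of j] AB[of "g i"] by metis
  have F7: "i < t \<Longrightarrow> g i \<in> X \<union> Y \<and> h i \<in> X \<union> Y" for i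
    using F1[of i] F2[of i] inV[of "g i" b] inV[of "h i" a] by blast
  have F8: "a \<in> X \<union> Y \<and> b \<in> X \<union> Y" using inV[OF ab] inV[OF Eba] by blast
  show ?thesis
    unfolding has_induced_biclaw_def
  proof (intro exI conjI)
    show "inj_on f (biclaw_verts t t)"
    proof (rule inj_onI)
      fix u v assume u: "u \<in> biclaw_verts t t" and v: "v \<in> biclaw_verts t t" and e: "f u = f v"
      show "u = v"
        using u v e
        unfolding biclaw_verts_def f_def
        apply (cases u; cases v)
        using ab_ne F5 F6 ginj hinj by (auto; metis)+
    qed
    show "f ` biclaw_verts t t \<subseteq> X \<union> Y"
    proof (rule image_subsetI)
      fix u assume u: "u \<in> biclaw_verts t t"
      show "f u \<in> X \<union> Y"
      proof (cases u)
        case BX then show ?thesis using F8 unfolding f_def by simp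
      next
        case BY then show ?thesis using F8 unfolding f_def by simp
      next
        case (BXi i) then have "i < t" using u unfolding biclaw_verts_def by auto
        then show ?thesis using F7[of i] BXi unfolding f_def by simp
      next
        case (BYi i) then have "i < t" using u unfolding biclaw_verts_def by auto
        then show ?thesis using F7[of i] BYi unfolding f_def by simp
      qed
    qed
    show "\<forall>u\<in>biclaw_verts t t. \<forall>v\<in>biclaw_verts t t. E (f u) (f v) = biclaw_edge u v"
    proof (intro ballI)
      fix u v assume u: "u \<in> biclaw_verts t t" and v: "v \<in> biclaw_verts t t"
      have i1: "\<And>i. BXi i \<in> biclaw_verts t t \<Longrightarrow> i < t" unfolding biclaw_verts_def by auto
      have i2: "\<And>i. BYi i \<in> biclaw_verts t t \<Longrightarrow> i < t" unfolding biclaw_verts_def by auto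
      show "E (f u) (f v) = biclaw_edge u v"
        apply (cases u; cases v)
        using u v i1 i2 F1 F2 F3 F4 ab Eba unfolding f_def by auto
    qed
  qed
qed

lemma card_filter_sum: "finite A \<Longrightarrow> card {x\<in>A. P x} = (\<Sum>x\<in>A. if P x then 1 else 0 :: nat)"
  by (simp add: sum.If_cases Int_def)

lemma sum_card_swap:
  assumes "finite A" "finite B"
  shows "(\<Sum>y\<in>B. card {w\<in>A. P w y}) = (\<Sum>w\<in>A. card {y\<in>B. P w y})"
proof -
  have "(\<Sum>y\<in>B. card {w\<in>A. P w y}) = (\<Sum>y\<in>B. \<Sum>w\<in>A. if P w y then 1 else 0 :: nat)"
    using assms by (simp add: card_filter_sum)
  also have "\<dots> = (\<Sum>w\<in>A. \<Sum>y\<in>B. if P w y then 1 else 0 :: nat)"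
    by (rule sum.swap)
  also have "\<dots> = (\<Sum>w\<in>A. card {y\<in>B. P w y})"
    using assms by (simp add: card_filter_sum)
  finally show ?thesis .
qed

lemma KI:
  fixes Rel :: "'a \<Rightarrow> 'b \<Rightarrow> bool"
  assumes fW: "finite W" and fQ: "finite Q" and Wne: "W \<noteq> {}" and cQ: "card Q \<le> q"
    and deg: "\<forall>w\<in>W. m \<le> card {y\<in>Q. \<not> Rel w y}"
  shows "2*k \<le> m \<Longrightarrow> \<exists>T W'. T \<subseteq> Q \<and> card T = k \<and> W' \<subseteq> W \<and> (\<forall>w\<in>W'. \<forall>y\<in>T. \<not> Rel w y)
           \<and> card W * m^k \<le> card W' * (2*q)^k"
proof (induction k)
  case 0
  show ?case by (rule exI[of _ "{}"], rule exI[of _ W]) simp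
next
  case (Suc k)
  then obtain T W' where T: "T \<subseteq> Q" and cT: "card T = k" and W'W: "W' \<subseteq> W"
    and noR: "\<forall>w\<in>W'. \<forall>y\<in>T. \<not> Rel w y" and ineq: "card W * m^k \<le> card W' * (2*q)^k"
    by auto
  have m2: "2*k + 2 \<le> m" using Suc.prems by simp
  have fW': "finite W'" using W'W fW finite_subset by blast
  have cW: "card W > 0" using fW Wne by (simp add: card_gt_0_iff)
  have mpos: "m > 0" using m2 by simp
  have "card W * m^k > 0" using cW mpos by simp
  hence W'ne: "W' \<noteq> {}" using ineq by (cases "W' = {}") auto
  define Q' where "Q' = Q - T"
  have fQ': "finite Q'" using fQ Q'_def by simp
  have fT: "finite T" using T fQ finite_subset by blast
  have each: "m - k \<le> card {y\<in>Q'. \<not> Rel w y}" if wW': "w \<in> W'" for w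
  proof -
    have "{y\<in>Q. \<not> Rel w y} \<subseteq> {y\<in>Q'. \<not> Rel w y} \<union> T" unfolding Q'_def by auto
    hence "card {y\<in>Q. \<not> Rel w y} \<le> card ({y\<in>Q'. \<not> Rel w y} \<union> T)"
      using fQ' fT by (intro card_mono) auto
    also have "\<dots> \<le> card {y\<in>Q'. \<not> Rel w y} + card T" by (rule card_Un_le)
    finally have "card {y\<in>Q. \<not> Rel w y} \<le> card {y\<in>Q'. \<not> Rel w y} + k" using cT by simp
    moreover have "m \<le> card {y\<in>Q. \<not> Rel w y}" using deg W'W wW' by auto
    ultimately show ?thesis by simp
  qed
  define cnt where "cnt y = card {w\<in>W'. \<not> Rel w y}" for y
  have sumeq: "(\<Sum>y\<in>Q'. cnt y) = (\<Sum>w\<in>W'. card {y\<in>Q'. \<not> Rel w y})"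
    unfolding cnt_def using sum_card_swap[OF fW' fQ'] .
  have sumge: "card W' * (m - k) \<le> (\<Sum>y\<in>Q'. cnt y)"
  proof -
    have "card W' * (m - k) = (\<Sum>w\<in>W'. m - k)" by simp
    also have "\<dots> \<le> (\<Sum>w\<in>W'. card {y\<in>Q'. \<not> Rel w y})" by (rule sum_mono) (rule each)
    finally show ?thesis using sumeq by simp
  qed
  obtain w0 where w0: "w0 \<in> W'" using W'ne by blast
  have "0 < card {y\<in>Q'. \<not> Rel w0 y}" using each[OF w0] m2 by simp
  hence Q'ne: "Q' \<noteq> {}" by (auto simp: card_gt_0_iff)
  obtain y where yQ': "y \<in> Q'" and ymax: "\<forall>y'\<in>Q'. cnt y' \<le> cnt y"
  proof -
    have "Max (cnt ` Q') \<in> cnt ` Q'" using fQ' Q'ne by simp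
    then obtain y where "y \<in> Q'" "cnt y = Max (cnt ` Q')" by auto
    moreover have "\<forall>y'\<in>Q'. cnt y' \<le> Max (cnt ` Q')" using fQ' by simp
    ultimately show ?thesis using that by auto
  qed
  have "(\<Sum>y\<in>Q'. cnt y) \<le> card Q' * cnt y" using sum_bounded_above[of Q' cnt "cnt y"] ymax by simp
  also have "\<dots> \<le> q * cnt y"
  proof -
    have "card Q' \<le> card Q" unfolding Q'_def using fQ by (intro card_mono) auto
    thus ?thesis using cQ by simp
  qed
  finally have A1: "card W' * (m - k) \<le> q * cnt y" using sumge by linarith
  have A2: "card W' * m \<le> 2 * q * cnt y"
  proof -
    have "m \<le> 2 * (m - k)" using m2 by simp
    hence "card W' * m \<le> card W' * (2 * (m - k))" by simp
    also have "\<dots> = 2 * (card W' * (m - k))" by simp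
    also have "\<dots> \<le> 2 * (q * cnt y)" using A1 by simp
    finally show ?thesis by simp
  qed
  define W'' where "W'' = {w\<in>W'. \<not> Rel w y}"
  have yT: "y \<notin> T" using yQ' Q'_def by simp
  show ?case
  proof (intro exI conjI)
    show "insert y T \<subseteq> Q" using yQ' T Q'_def by auto
    show "card (insert y T) = Suc k" using yT fT cT by simp
    show "W'' \<subseteq> W" using W'W W''_def by auto
    show "\<forall>w\<in>W''. \<forall>y'\<in>insert y T. \<not> Rel w y'" using noR W''_def by auto
    have "card W * m ^ Suc k = m * (card W * m^k)" by simp
    also have "\<dots> \<le> m * (card W' * (2*q)^k)" using ineq by simp
    also have "\<dots> = (card W' * m) * (2*q)^k" by simp
    also have "\<dots> \<le> (2 * q * cnt y) * (2*q)^k" using A2 by (rule mult_right_mono) simp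
    also have "\<dots> = card W'' * (2*q)^Suc k" unfolding W''_def cnt_def by simp
    finally show "card W * m ^ Suc k \<le> card W'' * (2 * q) ^ Suc k" .
  qed
qed

locale bgraph =
  fixes X Y :: "'a set" and E :: "'a \<Rightarrow> 'a \<Rightarrow> bool" and t :: nat
  assumes bip: "bipartite_graph X Y E"
    and nob: "\<not> has_induced_biclaw (X \<union> Y) E t t"
    and tpos: "t > 0"
begin

abbreviation "V \<equiv> X \<union> Y"
abbreviation "NB v \<equiv> nbhd V E v"
abbreviation "dg v \<equiv> degree V E v"

lemma finV: "finite V" using bip unfolding bipartite_graph_def by auto

lemma finN: "finite (NB v)" unfolding nbhd_def using finV by simp

lemma Esym: "E u v \<Longrightarrow> E v u" using bip_sym[OF bip] .

lemma Ein: "E u v \<Longrightarrow> u \<in> V \<and> v \<in> V" using bip_in[OF bip] .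

lemma NB_iff: "w \<in> NB v \<longleftrightarrow> E v w"
  unfolding nbhd_def using Ein by blast

lemma biclaw_contra:
  assumes ab: "E a b" and cA: "card A = t" and cB: "card B = t"
    and A: "A \<subseteq> NB b" and B: "B \<subseteq> NB a"
    and aA: "a \<notin> A" and bB: "b \<notin> B"
    and noE: "\<forall>p\<in>A. \<forall>q\<in>B. \<not> E p q"
  shows False
proof -
  have "has_induced_biclaw (X \<union> Y) E t t"
    by (rule biclaw_build[OF bip ab cA cB _ _ aA bB noE tpos]) (use A B NB_iff in auto)
  thus False using nob by blast
qed

definition Bad :: "nat \<Rightarrow> 'a \<Rightarrow> 'a \<Rightarrow> 'a set" where
  "Bad N u y = {w\<in>NB y. w \<noteq> u \<and> dg u \<le> N * card (NB u - NB w)}"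

lemma CL:
  assumes uy: "E u y" and N1: "N \<ge> 1" and du: "dg u \<ge> N * (2*t+1)"
  shows "card (Bad N u y) < t * (4*N)^t"
proof (rule ccontr)
  assume "\<not> ?thesis"
  hence big: "t * (4*N)^t \<le> card (Bad N u y)" by simp
  define m where "m = dg u div N"
  define Q where "Q = NB u - {y}"
  have m2: "2*t+1 \<le> m"
  proof -
    have "2*t+1 = (N*(2*t+1)) div N" using N1 by simp
    also have "\<dots> \<le> dg u div N" by (rule div_le_mono[OF du])
    finally show ?thesis unfolding m_def .
  qed
  have fB: "finite (Bad N u y)" unfolding Bad_def using finN by simp
  have Bne: "Bad N u y \<noteq> {}" using big tpos N1 by (auto simp: card_gt_0_iff)
  have fQ: "finite Q" unfolding Q_def using finN by simp
  have cQ: "card Q \<le> dg u" unfolding Q_def degree_def using finN by (simp add: card_Diff1_le)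
  have deg: "\<forall>w\<in>Bad N u y. m \<le> card {q\<in>Q. \<not> E w q}"
  proof
    fix w assume w: "w \<in> Bad N u y"
    hence wy: "E y w" and dle: "dg u \<le> N * card (NB u - NB w)" unfolding Bad_def by (auto simp: NB_iff)
    have "NB u - NB w \<subseteq> {q\<in>Q. \<not> E w q}"
      unfolding Q_def using wy Esym by (auto simp: NB_iff)
    hence "card (NB u - NB w) \<le> card {q\<in>Q. \<not> E w q}" using fQ by (intro card_mono) auto
    moreover have "m \<le> card (NB u - NB w)"
    proof -
      have "m \<le> (N * card (NB u - NB w)) div N" unfolding m_def by (rule div_le_mono[OF dle])
      also have "\<dots> = card (NB u - NB w)" using N1 by simp
      finally show ?thesis .
    qed
    ultimately show "m \<le> card {q\<in>Q. \<not> E w q}" by simp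
  qed
  obtain T W' where T: "T \<subseteq> Q" and cT: "card T = t" and W': "W' \<subseteq> Bad N u y"
    and noR: "\<forall>w\<in>W'. \<forall>q\<in>T. \<not> E w q"
    and ineq: "card (Bad N u y) * m^t \<le> card W' * (2 * dg u)^t"
    using KI[OF fB fQ Bne cQ deg, of t] m2 by auto
  have "dg u < N * (m + 1)"
  proof -
    have "dg u = N * m + dg u mod N" unfolding m_def by simp
    moreover have "dg u mod N < N" using N1 by simp
    ultimately show ?thesis by simp
  qed
  moreover have "N \<le> N * m" using m2 by simp
  moreover have "N * (m + 1) = N * m + N" "4 * N * m = 4 * (N * m)" by simp_all
  ultimately have "2 * dg u \<le> 4 * N * m" by linarith
  hence "(2 * dg u)^t \<le> (4*N*m)^t" by (rule power_mono) simp
  hence "card W' * (2 * dg u)^t \<le> card W' * ((4*N)^t * m^t)" by (simp add: power_mult_distrib)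
  moreover have "t * ((4*N)^t * m^t) \<le> card (Bad N u y) * m^t" using big by simp
  ultimately have "t * ((4*N)^t * m^t) \<le> card W' * ((4*N)^t * m^t)" using ineq by linarith
  moreover have "(4*N)^t * m^t > 0" using N1 m2 by simp
  ultimately have tW: "t \<le> card W'" by simp
  obtain A' where A': "A' \<subseteq> W'" "card A' = t"
    using obtain_subset_with_card_n[OF tW] by blast
  show False
  proof (rule biclaw_contra[OF uy A'(2) cT])
    show "A' \<subseteq> NB y" using A' W' unfolding Bad_def by auto
    show "T \<subseteq> NB u" using T Q_def by auto
    show "u \<notin> A'" using A' W' unfolding Bad_def by auto
    show "y \<notin> T" using T Q_def by auto
    show "\<forall>p\<in>A'. \<forall>q\<in>T. \<not> E p q" using noR A' by auto
  qed
qed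

end

primrec reach :: "'a set \<Rightarrow> ('a \<Rightarrow> 'a \<Rightarrow> bool) \<Rightarrow> 'a \<Rightarrow> nat \<Rightarrow> 'a set" where
  "reach V E z 0 = {z}"
| "reach V E z (Suc k) = reach V E z k \<union> {w\<in>V. \<exists>u\<in>reach V E z k. E u w}"

locale lgraph = bgraph X Y E t for X Y :: "'a set" and E and t +
  fixes z :: 'a
  assumes zX: "z \<in> X" and conn: "connected_graph (X \<union> Y) E"
begin

abbreviation "R k \<equiv> reach V E z k"
definition lay :: "'a \<Rightarrow> nat" where "lay v = (LEAST k. v \<in> R k)"

lemma R_mono: "i \<le> j \<Longrightarrow> R i \<subseteq> R j"
  by (induction j) (auto simp: le_Suc_eq)

lemma R_step: "u \<in> R k \<Longrightarrow> E u w \<Longrightarrow> w \<in> R (Suc k)"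
  using Ein by auto

lemma reach_all: assumes "v \<in> V" shows "\<exists>k. v \<in> R k"
proof -
  have "(\<lambda>a b. a \<in> V \<and> b \<in> V \<and> E a b)\<^sup>*\<^sup>* z v" using conn zX assms unfolding connected_graph_def by blast
  thus ?thesis
  proof (induction rule: rtranclp_induct)
    case base then show ?case by (intro exI[of _ 0]) simp
  next
    case (step b c)
    then obtain k where "b \<in> R k" by blast
    then show ?case using step R_step by blast
  qed
qed

lemma lay_in: "v \<in> V \<Longrightarrow> v \<in> R (lay v)"
  unfolding lay_def using reach_all by (rule LeastI_ex) 

lemma lay_le: "v \<in> R k \<Longrightarrow> lay v \<le> k"
  unfolding lay_def by (rule Least_le)

lemma lay_z: "lay z = 0" using lay_le[of z 0] by simp

lemma lay0: "v \<in> V \<Longrightarrow> lay v = 0 \<Longrightarrow> v = z"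
  using lay_in[of v] by simp

lemma edge_lay: "E u w \<Longrightarrow> lay w \<le> Suc (lay u)"
  using lay_le R_step lay_in Ein by blast

lemma parent: assumes v: "v \<in> V" and l: "lay v = Suc i"
  shows "\<exists>u. E u v \<and> lay u = i"
proof -
  have "v \<in> R (Suc i)" using lay_in[OF v] l by simp
  moreover have "v \<notin> R i" using lay_le[of v i] l by auto
  ultimately obtain u where u: "u \<in> R i" "E u v" by auto
  have "lay u \<le> i" using lay_le[OF u(1)] .
  moreover have "lay v \<le> Suc (lay u)" using edge_lay[OF u(2)] .
  ultimately show ?thesis using u l by (intro exI[of _ u]) simp
qed

lemma parity: "v \<in> V \<Longrightarrow> (v \<in> X \<longleftrightarrow> even (lay v))"
proof (induction "lay v" arbitrary: v)
  case 0 then show ?case using lay0 zX by auto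
next
  case (Suc i)
  obtain u where u: "E u v" "lay u = i" using parent[OF Suc.prems] Suc.hyps(2) by metis
  have uV: "u \<in> V" using Ein u(1) by blast
  have "u \<in> X \<longleftrightarrow> even (lay u)" using Suc.hyps(1)[OF u(2)[symmetric] uV] .
  hence "u \<in> X \<longleftrightarrow> even i" using u(2) by simp
  moreover have "u \<in> X \<longleftrightarrow> v \<notin> X" using u(1) bip unfolding bipartite_graph_def by blast
  ultimately have "v \<in> X \<longleftrightarrow> \<not> even i" by blast
  thus ?case using Suc.hyps(2)[symmetric] by simp
qed

lemma edge_lay2: assumes e: "E u w" shows "lay w = Suc (lay u) \<or> lay u = Suc (lay w)"
proof -
  have "lay w \<le> Suc (lay u)" "lay u \<le> Suc (lay w)" using edge_lay e Esym by blast+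
  moreover have "lay u \<noteq> lay w"
  proof
    assume eq: "lay u = lay w"
    have "u \<in> V" "w \<in> V" using Ein e by auto
    hence "u \<in> X \<longleftrightarrow> even (lay u)" "w \<in> X \<longleftrightarrow> even (lay w)" using parity by blast+
    hence "u \<in> X \<longleftrightarrow> w \<in> X" using eq by simp
    moreover have "u \<in> X \<longleftrightarrow> w \<notin> X" using e bip unfolding bipartite_graph_def by blast
    ultimately show False by blast
  qed
  ultimately show ?thesis by linarith
qed

definition bk :: "'a \<Rightarrow> nat" where "bk v = card {w\<in>NB v. Suc (lay w) = lay v}"
definition fw :: "'a \<Rightarrow> nat" where "fw v = card {w\<in>NB v. lay w = Suc (lay v)}"

lemma dg_split: "dg v = bk v + fw v"
proof -
  have "NB v = {w\<in>NB v. Suc (lay w) = lay v} \<union> {w\<in>NB v. lay w = Suc (lay v)}"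
  proof (intro equalityI subsetI)
    fix x assume "x \<in> NB v"
    hence "E v x" by (simp add: NB_iff)
    hence "lay x = Suc (lay v) \<or> lay v = Suc (lay x)" by (rule edge_lay2)
    thus "x \<in> {w\<in>NB v. Suc (lay w) = lay v} \<union> {w\<in>NB v. lay w = Suc (lay v)}"
      using \<open>x \<in> NB v\<close> by auto
  qed auto
  moreover have "{w\<in>NB v. Suc (lay w) = lay v} \<inter> {w\<in>NB v. lay w = Suc (lay v)} = {}" by auto
  ultimately show ?thesis unfolding degree_def bk_def fw_def
    by (metis (no_types, lifting) card_Un_disjoint finN finite_Un)
qed

lemma LB:
  assumes e: "E u w" and l: "lay w = Suc (lay u)" and l1: "lay u \<ge> 1"
    and b: "t \<le> bk u" and f: "t \<le> fw w"
  shows False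
proof -
  obtain S where S: "S \<subseteq> {x\<in>NB w. lay x = Suc (lay w)}" "card S = t"
    using obtain_subset_with_card_n[of t] f unfolding fw_def by metis
  obtain T where T: "T \<subseteq> {x\<in>NB u. Suc (lay x) = lay u}" "card T = t"
    using obtain_subset_with_card_n[of t] b unfolding bk_def by metis
  show False
  proof (rule biclaw_contra[OF e S(2) T(2)])
    show "S \<subseteq> NB w" "T \<subseteq> NB u" using S T by auto
    show "u \<notin> S" using S l by auto
    show "w \<notin> T" using T l by auto
    show "\<forall>p\<in>S. \<forall>q\<in>T. \<not> E p q"
    proof (intro ballI notI)
      fix p q assume p: "p \<in> S" and q: "q \<in> T" and pq: "E p q"
      have "lay p = lay u + 2" "Suc (lay q) = lay u" using p q S T l by auto
      thus False using edge_lay2[OF pq] by linarith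
    qed
  qed
qed

end

lemma inter3:
  assumes "finite A" "finite B" "finite C"
  shows "card (A \<inter> C) + card (B \<inter> C) \<le> card C + card (A \<inter> B)"
proof -
  have "card ((A \<inter> C) \<union> (B \<inter> C)) + card ((A \<inter> C) \<inter> (B \<inter> C)) = card (A \<inter> C) + card (B \<inter> C)"
    using card_Un_Int[of "A \<inter> C" "B \<inter> C"] assms by simp
  moreover have "card ((A \<inter> C) \<union> (B \<inter> C)) \<le> card C" using assms by (intro card_mono) auto
  moreover have "card ((A \<inter> C) \<inter> (B \<inter> C)) \<le> card (A \<inter> B)" using assms by (intro card_mono) auto
  ultimately show ?thesis by linarith
qed

lemma card_2_le_aux: "card {a, b} \<le> 2" by (simp add: card_insert_le_m1)

locale mgraph = lgraph X Y E t z for X Y :: "'a set" and E t z +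
  fixes N K D :: nat and \<epsilon> :: real
  assumes N4: "N \<ge> 4" and Kdef: "K = t * (4*N)^t"
    and mind: "\<forall>v\<in>V. N*(2*t+1) + 2*(K+t) + 3 \<le> dg v"
    and Dmax: "\<forall>u\<in>X. dg u \<le> D" and zD: "dg z = D"
    and eps0: "0 < \<epsilon>" and eps1: "\<epsilon> < 1/10" and Neps: "real N * \<epsilon> \<ge> 1"
begin

definition cov :: "'a \<Rightarrow> 'a \<Rightarrow> bool" where "cov u w \<longleftrightarrow> N * card (NB u - NB w) < dg u"

lemma Kt: "t \<le> K"
proof -
  have "1 \<le> (4*N)^t" using N4 by simp
  thus ?thesis unfolding Kdef by simp
qed

lemma dgV: "v \<in> V \<Longrightarrow> N*(2*t+1) + 2*(K+t) + 3 \<le> dg v" using mind by blast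

lemma CLK: assumes e: "E u y" shows "card (Bad N u y) < K"
proof -
  have uV: "u \<in> V" using Ein e by blast
  have "N*(2*t+1) \<le> dg u" using dgV[OF uV] by linarith
  moreover have "N \<ge> 1" using N4 by simp
  ultimately show ?thesis unfolding Kdef using CL[OF e] by blast
qed

lemma Bad_iff: "w \<in> Bad N u y \<longleftrightarrow> E y w \<and> w \<noteq> u \<and> \<not> cov u w"
  unfolding Bad_def cov_def by (auto simp: NB_iff)

lemma finBad: "finite (Bad N u y)" unfolding Bad_def using finN by simp

lemma pick2:
  assumes e1: "E u1 y" and e2: "E u2 y"
  shows "\<exists>c. E y c \<and> c \<noteq> u1 \<and> c \<noteq> u2 \<and> cov u1 c \<and> cov u2 c"
proof -
  have yV: "y \<in> V" using Ein e1 by blast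
  have c1: "card (Bad N u1 y) < K" using CLK[OF e1] .
  have c2: "card (Bad N u2 y) < K" using CLK[OF e2] .
  have "card (Bad N u1 y \<union> Bad N u2 y \<union> {u1, u2}) \<le> card (Bad N u1 y \<union> Bad N u2 y) + card {u1,u2}"
    by (rule card_Un_le)
  also have "\<dots> \<le> card (Bad N u1 y) + card (Bad N u2 y) + card {u1,u2}"
    using card_Un_le[of "Bad N u1 y" "Bad N u2 y"] by linarith
  also have "\<dots> \<le> 2*K + 2" using c1 c2 card_2_le_aux[of u1 u2] by linarith
  also have "\<dots> < N*(2*t+1) + 2*(K+t) + 3" by simp
  also have "\<dots> \<le> dg y" using dgV[OF yV] .
  finally have "card (Bad N u1 y \<union> Bad N u2 y \<union> {u1, u2}) < card (NB y)" unfolding degree_def .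
  hence "\<not> NB y \<subseteq> Bad N u1 y \<union> Bad N u2 y \<union> {u1, u2}"
  proof (intro notI)
    assume sub: "NB y \<subseteq> Bad N u1 y \<union> Bad N u2 y \<union> {u1, u2}"
    have "finite (Bad N u1 y \<union> Bad N u2 y \<union> {u1, u2})" using finBad by simp
    hence "card (NB y) \<le> card (Bad N u1 y \<union> Bad N u2 y \<union> {u1, u2})" using sub by (rule card_mono)
    moreover assume "card (Bad N u1 y \<union> Bad N u2 y \<union> {u1, u2}) < card (NB y)"
    ultimately show False by linarith
  qed
  then obtain c where "c \<in> NB y" "c \<notin> Bad N u1 y" "c \<notin> Bad N u2 y" "c \<noteq> u1" "c \<noteq> u2" by blast
  thus ?thesis by (auto simp: Bad_iff NB_iff)
qed


end

context mgraph begin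

lemma dgV2: "v \<in> V \<Longrightarrow> 2*K + 2*t + 3 \<le> dg v"
proof -
  assume "v \<in> V"
  hence "N*(2*t+1) + 2*(K+t) + 3 \<le> dg v" by (rule dgV)
  moreover have "2*K + 2*t + 3 \<le> N*(2*t+1) + 2*(K+t) + 3" by simp
  ultimately show ?thesis by (rule le_trans[rotated])
qed

lemma card_split: "dg u = card (NB u \<inter> NB w) + card (NB u - NB w)"
  unfolding degree_def using card_Int_Diff[OF finN] .

lemma cov4: "cov u w \<Longrightarrow> 4 * card (NB u - NB w) < dg u"
proof -
  assume "cov u w"
  hence "N * card (NB u - NB w) < dg u" unfolding cov_def .
  moreover have "4 * card (NB u - NB w) \<le> N * card (NB u - NB w)" using N4 by simp
  ultimately show ?thesis by linarith
qed

lemma nbz: "E z w \<Longrightarrow> lay w = 1"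
  using edge_lay2[of z w] lay_z by auto

lemma final_contra:
  assumes v3V: "v3 \<in> V" and l3: "lay v3 = 3" and b3: "bk v3 < K"
    and e23: "E v2 v3" and l2: "lay v2 = 2" and b2: "bk v2 < t"
  shows False
proof -
  have v2V: "v2 \<in> V" using Ein e23 by blast
  obtain v1 where e12: "E v1 v2" and l1: "lay v1 = 1" using parent[OF v2V] l2 by (metis numeral_2_eq_2 One_nat_def)
  have v1V: "v1 \<in> V" using Ein e12 by blast
  obtain w where ew: "E w v1" and lw: "lay w = 0" using parent[OF v1V] l1 by (metis One_nat_def)
  have "w = z" using lay0 lw Ein ew by blast
  hence ez1: "E z v1" using ew by simp
  obtain c where ec: "E v1 c" and cz: "c \<noteq> z" and cv2: "c \<noteq> v2" and covz: "cov z c" and cov2: "cov v2 c"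
    using pick2[OF ez1 Esym[OF e12]] by blast
  have cV: "c \<in> V" using Ein ec by blast
  have lc: "lay c = 2"
  proof -
    have "lay c = Suc (lay v1) \<or> lay v1 = Suc (lay c)" using edge_lay2[OF ec] .
    moreover have "lay c \<noteq> 0" using lay0[OF cV] cz by blast
    ultimately show ?thesis using l1 by auto
  qed
  have bkc: "t \<le> bk c"
  proof -
    have sub: "NB c \<inter> NB z \<subseteq> {w\<in>NB c. Suc (lay w) = lay c}"
      using nbz lc by (auto simp: NB_iff)
    have "card (NB c \<inter> NB z) \<le> bk c" unfolding bk_def using sub finN by (intro card_mono) auto
    moreover have "dg z = card (NB z \<inter> NB c) + card (NB z - NB c)" by (rule card_split)
    moreover have "4 * card (NB z - NB c) < dg z" using cov4[OF covz] .
    moreover have "2*K + 2*t + 3 \<le> dg z" using dgV2 zX by blast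
    moreover have "card (NB z \<inter> NB c) = card (NB c \<inter> NB z)" by (simp add: Int_commute)
    ultimately show ?thesis by linarith
  qed
  define A where "A = {y\<in>NB v2. lay y = Suc (lay v2)}"
  define P where "P = (A - (NB v2 - NB c)) - Bad N v3 v2"
  have fA: "card A = fw v2" unfolding A_def fw_def ..
  have "card A - card (NB v2 - NB c) \<le> card (A - (NB v2 - NB c))"
    by (rule diff_card_le_card_Diff) (simp add: finN)
  moreover have "card (A - (NB v2 - NB c)) - card (Bad N v3 v2) \<le> card P"
    unfolding P_def by (rule diff_card_le_card_Diff[OF finBad])
  moreover have "card (Bad N v3 v2) < K" using CLK[OF Esym[OF e23]] .
  moreover have "4 * card (NB v2 - NB c) < dg v2" using cov4[OF cov2] .
  moreover have "dg v2 = bk v2 + fw v2" by (rule dg_split)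
  moreover have "2*K + 2*t + 3 \<le> dg v2" using dgV2 v2V by blast
  ultimately have "card P > 0" using b2 fA by linarith
  then obtain y where yP: "y \<in> P" by (metis card_gt_0_iff ex_in_conv)
  have ey2: "E v2 y" and ly: "lay y = 3" and ecy: "E c y" and ynb: "y \<notin> Bad N v3 v2"
    using yP l2 unfolding P_def A_def by (auto simp: NB_iff)
  have covy: "4 * card (NB v3 - NB y) < dg v3"
  proof (cases "y = v3")
    case True
    then show ?thesis using dgV[OF v3V] by simp
  next
    case False
    hence "cov v3 y" using ynb ey2 by (auto simp: Bad_iff)
    thus ?thesis by (rule cov4)
  qed
  have fwy: "t \<le> fw y"
  proof -
    define B where "B = {w\<in>NB v3. lay w = Suc (lay v3)}"
    have "B - (NB v3 - NB y) \<subseteq> {w\<in>NB y. lay w = Suc (lay y)}"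
      unfolding B_def using l3 ly by auto
    hence "card (B - (NB v3 - NB y)) \<le> fw y" unfolding fw_def using finN by (intro card_mono) auto
    moreover have "card B - card (NB v3 - NB y) \<le> card (B - (NB v3 - NB y))"
      by (rule diff_card_le_card_Diff) (simp add: finN)
    moreover have "card B = fw v3" unfolding B_def fw_def ..
    moreover have "dg v3 = bk v3 + fw v3" by (rule dg_split)
    moreover have "2*K + 2*t + 3 \<le> dg v3" using dgV2 v3V by blast
    ultimately show ?thesis using covy b3 by linarith
  qed
  show False using LB[OF ecy _ _ bkc fwy] ly lc by simp
qed

lemma chain: "v \<in> V \<Longrightarrow> lay v = Suc (Suc (Suc j)) \<Longrightarrow> bk v < K \<Longrightarrow> False"
proof (induction j arbitrary: v)
  case 0
  obtain u where eu: "E u v" and lu: "lay u = 2" using parent[OF 0(1)] 0(2) by (metis numeral_2_eq_2)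
  have "fw v \<ge> t" using dg_split[of v] dgV2[OF 0(1)] 0(3) by linarith
  hence "bk u < t" using LB[OF eu] lu 0(2) by (metis not_le numeral_2_eq_2 one_le_numeral)
  thus False using final_contra[OF 0(1) _ 0(3) eu lu] 0(2) by simp
next
  case (Suc j)
  obtain u where eu: "E u v" and lu: "lay u = Suc (Suc (Suc j))" using parent[OF Suc(2)] Suc(3) by metis
  have uV: "u \<in> V" using Ein eu by blast
  have "fw v \<ge> t" using dg_split[of v] dgV2[OF Suc(2)] Suc(4) by linarith
  hence "bk u < t" using LB[OF eu] lu Suc(3) by (metis not_le le_add1 plus_1_eq_Suc)
  hence "bk u < K" using Kt by linarith
  thus False using Suc.IH[OF uV lu] by blast
qed

end

context mgraph begin

lemma hiN:
  assumes hi: "real (dg x) > (1-\<epsilon>) * real D"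
  shows "real N * real (dg x) - real (dg x) > 2 * real D"
proof -
  have N1: "real N - 1 \<ge> 3" using N4 by simp
  have "(real N - 1) * real (dg x) > (real N - 1) * ((1-\<epsilon>) * real D)"
    by (rule mult_strict_left_mono[OF hi]) (use N1 in simp)
  moreover have "(real N - 1) * ((1-\<epsilon>) * real D) = ((real N - 1) * (1-\<epsilon>)) * real D" by simp
  moreover have "(real N - 1) * (1-\<epsilon>) \<ge> 2"
  proof -
    have "(real N - 1) * (1-\<epsilon>) \<ge> 3 * (1-\<epsilon>)" by (rule mult_right_mono[OF N1]) (use eps1 in simp)
    thus ?thesis using eps1 by simp
  qed
  hence "((real N - 1) * (1-\<epsilon>)) * real D \<ge> 2 * real D" by (rule mult_right_mono) simp
  ultimately have "(real N - 1) * real (dg x) > 2 * real D" by linarith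
  thus ?thesis by (simp add: algebra_simps)
qed

lemma covR: "cov u w \<Longrightarrow> real N * real (card (NB u - NB w)) < real (dg u)"
proof -
  assume "cov u w"
  hence "N * card (NB u - NB w) < dg u" unfolding cov_def .
  hence "real (N * card (NB u - NB w)) < real (dg u)" by (simp only: of_nat_less_iff)
  thus ?thesis by simp
qed

lemma lay_X: "v \<in> V \<Longrightarrow> even (lay v) \<Longrightarrow> v \<in> X" using parity by blast

lemma top:
  assumes xX: "x \<in> X" and hi: "real (dg x) > (1-\<epsilon>) * real D" and l: "lay x \<ge> 3"
  shows False
proof -
  have xV: "x \<in> V" using xX by simp
  have ev: "even (lay x)" using parity xV xX by blast
  obtain j where lj: "lay x = Suc (Suc (Suc (Suc j)))"
  proof -
    have "lay x \<noteq> 3"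
    proof
      assume "lay x = 3"
      with ev show False by simp
    qed
    hence "lay x \<ge> 4" using l by linarith
    hence "lay x = Suc (Suc (Suc (Suc (lay x - 4))))" by simp
    thus ?thesis using that by blast
  qed
  obtain y where eyx: "E y x" and ly: "lay y = Suc (Suc (Suc j))" using parent[OF xV lj] by blast
  have yV: "y \<in> V" using Ein eyx by blast
  have HN: "real N * real (dg x) - real (dg x) > 2 * real D" using hiN[OF hi] .
  have Dnn: "real D \<ge> 0" by simp
  show False
  proof (cases "\<exists>c. E y c \<and> lay c = Suc (Suc j) \<and> cov x c")
    case True
    then obtain c where eyc: "E y c" and lc: "lay c = Suc (Suc j)" and covx: "cov x c" by blast
    have cV: "c \<in> V" using Ein eyc by blast
    have cX: "c \<in> X" using lay_X[OF cV] ev lj lc by simp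
    have dcD: "dg c \<le> D" using Dmax cX by blast
    have isub: "NB x \<inter> NB c \<subseteq> {w\<in>NB c. lay w = Suc (lay c)}"
    proof
      fix w assume w: "w \<in> NB x \<inter> NB c"
      hence "E x w" "E c w" by (auto simp: NB_iff)
      hence "lay w = Suc (lay x) \<or> lay x = Suc (lay w)" "lay w = Suc (lay c) \<or> lay c = Suc (lay w)"
        using edge_lay2 by blast+
      hence "lay w = Suc (lay c)" using lj lc by arith
      thus "w \<in> {w\<in>NB c. lay w = Suc (lay c)}" using w by blast
    qed
    have fwc: "card (NB x \<inter> NB c) \<le> fw c" unfolding fw_def using isub finN by (intro card_mono) auto
    have splx: "dg x = card (NB x \<inter> NB c) + card (NB x - NB c)" by (rule card_split)
    have ca: "real N * real (card (NB x - NB c)) < real (dg x)" using covR[OF covx] .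
    obtain y' where ey'c: "E y' c" and ly': "lay y' = Suc j" using parent[OF cV lc] by blast
    have y'V: "y' \<in> V" using Ein ey'c by blast
    have bsub: "{w\<in>NB y'. Suc (lay w) = lay y'} \<subseteq> Bad N c y'"
    proof
      fix w assume w: "w \<in> {w\<in>NB y'. Suc (lay w) = lay y'}"
      hence ew: "E y' w" and lw: "lay w = j" using ly' by (auto simp: NB_iff)
      have wc: "w \<noteq> c" using lw lc by auto
      have isub2: "NB c \<inter> NB w \<subseteq> {u\<in>NB c. Suc (lay u) = lay c}"
      proof
        fix u assume u: "u \<in> NB c \<inter> NB w"
        hence "E c u" "E w u" by (auto simp: NB_iff)
        hence "lay u = Suc (lay c) \<or> lay c = Suc (lay u)" "lay u = Suc (lay w) \<or> lay w = Suc (lay u)"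
          using edge_lay2 by blast+
        hence "Suc (lay u) = lay c" using lw lc by arith
        thus "u \<in> {u\<in>NB c. Suc (lay u) = lay c}" using u by blast
      qed
      have "card (NB c \<inter> NB w) \<le> bk c" unfolding bk_def using isub2 finN by (intro card_mono) auto
      moreover have "dg c = bk c + fw c" by (rule dg_split)
      moreover have "dg c = card (NB c \<inter> NB w) + card (NB c - NB w)" by (rule card_split)
      ultimately have bge: "card (NB c - NB w) + card (NB x - NB c) \<ge> dg x" using fwc splx by linarith
      hence "real (card (NB c - NB w)) \<ge> real (dg x) - real (card (NB x - NB c))" by linarith
      hence "real N * real (card (NB c - NB w)) \<ge> real N * (real (dg x) - real (card (NB x - NB c)))"
        by (rule mult_left_mono) simp
      hence "real N * real (card (NB c - NB w)) \<ge> real N * real (dg x) - real N * real (card (NB x - NB c))"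
        by (simp add: algebra_simps)
      moreover have "real (dg c) \<le> real D" using dcD by simp
      ultimately have "real (dg c) < real N * real (card (NB c - NB w))" using ca HN Dnn by linarith
      hence "real (dg c) < real (N * card (NB c - NB w))" by simp
      hence "dg c < N * card (NB c - NB w)" by (simp only: of_nat_less_iff)
      hence "\<not> cov c w" unfolding cov_def by simp
      thus "w \<in> Bad N c y'" using ew wc by (simp add: Bad_iff)
    qed
    have bky': "bk y' < K"
    proof -
      have "bk y' \<le> card (Bad N c y')" unfolding bk_def using bsub finBad by (intro card_mono) auto
      thus ?thesis using CLK[OF Esym[OF ey'c]] by linarith
    qed
    show False
    proof (cases j)
      case 0
      hence ly'1: "lay y' = Suc 0" using ly' by simp
      obtain w0 where ew0: "E w0 y'" and lw0: "lay w0 = 0" using parent[OF y'V ly'1] by blast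
      have "w0 = z" using lay0 lw0 Ein ew0 by blast
      hence ezy': "E z y'" using ew0 by simp
      obtain cs where eycs: "E y' cs" and covz: "cov z cs" and covc: "cov c cs"
        using pick2[OF ezy' Esym[OF ey'c]] by blast
      have csV: "cs \<in> V" using Ein eycs by blast
      have "lay cs = Suc (lay y') \<or> lay y' = Suc (lay cs)" using edge_lay2[OF eycs] .
      hence "even (lay cs)" using ly'1 by auto
      hence csX: "cs \<in> X" using lay_X[OF csV] by blast
      have dcs: "dg cs \<le> D" using Dmax csX by blast
      have i3: "card (NB c \<inter> NB cs) + card (NB z \<inter> NB cs) \<le> card (NB cs) + card (NB c \<inter> NB z)"
        using inter3 finN by blast
      have czsub: "NB c \<inter> NB z \<subseteq> {w\<in>NB c. Suc (lay w) = lay c}"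
        using nbz lc 0 by (auto simp: NB_iff)
      have "card (NB c \<inter> NB z) \<le> bk c" unfolding bk_def using czsub finN by (intro card_mono) auto
      moreover have "dg c = bk c + fw c" by (rule dg_split)
      moreover have "dg c = card (NB c \<inter> NB cs) + card (NB c - NB cs)" by (rule card_split)
      moreover have "dg z = card (NB z \<inter> NB cs) + card (NB z - NB cs)" by (rule card_split)
      moreover have "card (NB cs) = dg cs" unfolding degree_def ..
      ultimately have "dg x \<le> card (NB x - NB c) + card (NB c - NB cs) + card (NB z - NB cs)"
        using i3 fwc splx dcs zD by linarith
      hence "real (dg x) \<le> real (card (NB x - NB c)) + real (card (NB c - NB cs)) + real (card (NB z - NB cs))"
        by linarith
      hence "real N * real (dg x) \<le> real N * (real (card (NB x - NB c)) + real (card (NB c - NB cs)) + real (card (NB z - NB cs)))"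
        by (rule mult_left_mono) simp
      hence "real N * real (dg x) \<le> real N * real (card (NB x - NB c)) + real N * real (card (NB c - NB cs)) + real N * real (card (NB z - NB cs))"
        by (simp add: algebra_simps)
      moreover have "real N * real (card (NB c - NB cs)) < real (dg c)" using covR[OF covc] .
      moreover have "real N * real (card (NB z - NB cs)) < real (dg z)" using covR[OF covz] .
      moreover have "real (dg c) \<le> real D" using dcD by simp
      moreover have "real (dg z) = real D" using zD by simp
      ultimately show False using ca HN by linarith
    next
      case (Suc j')
      have "even j" using ev lj by simp
      hence "odd j'" using Suc by simp
      then obtain j'' where "j' = Suc j''" by (cases j') auto
      thus False using chain[OF y'V _ bky'] ly' Suc by simp
    qed
  next
    case False
    have bsub: "{w\<in>NB y. Suc (lay w) = lay y} \<subseteq> Bad N x y"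
    proof
      fix w assume w: "w \<in> {w\<in>NB y. Suc (lay w) = lay y}"
      hence ew: "E y w" and lw: "lay w = Suc (Suc j)" using ly by (auto simp: NB_iff)
      have "w \<noteq> x" using lw lj by auto
      moreover have "\<not> cov x w" using False ew lw by blast
      ultimately show "w \<in> Bad N x y" using ew by (simp add: Bad_iff)
    qed
    have "bk y \<le> card (Bad N x y)" unfolding bk_def using bsub finBad by (intro card_mono) auto
    hence "bk y < K" using CLK[OF Esym[OF eyx]] by linarith
    thus False using chain[OF yV ly] by blast
  qed
qed

end

context mgraph begin

lemma near:
  assumes xX: "x \<in> X" and hi: "real (dg x) > (1-\<epsilon>) * real D"
  shows "x = z \<or> (\<exists>y. E z y \<and> E x y)"
proof -
  have xV: "x \<in> V" using xX by simp
  have ev: "even (lay x)" using parity xV xX by blast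
  have "lay x < 3" using top[OF xX hi] by (meson not_le)
  hence "lay x = 0 \<or> lay x = 2" using ev by (cases "lay x"; auto; rename_tac k; case_tac k; auto)
  thus ?thesis
  proof
    assume "lay x = 0" thus ?thesis using lay0 xV by blast
  next
    assume l2: "lay x = 2"
    obtain y where eyx: "E y x" and ly: "lay y = 1" using parent[OF xV] l2 by (metis numeral_2_eq_2 One_nat_def)
    have yV: "y \<in> V" using Ein eyx by blast
    obtain w0 where ew0: "E w0 y" and lw0: "lay w0 = 0" using parent[OF yV] ly by (metis One_nat_def)
    have "w0 = z" using lay0 lw0 Ein ew0 by blast
    thus ?thesis using ew0 eyx Esym by blast
  qed
qed

lemma small_part:
  assumes "real N * real a < real D"
  shows "real a < \<epsilon> * real D"
proof -
  have "real D = 1 * real D" by simp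
  also have "\<dots> \<le> (real N * \<epsilon>) * real D" by (rule mult_right_mono[OF Neps]) simp
  finally have "real N * real a < real N * (\<epsilon> * real D)" using assms by (simp add: algebra_simps)
  thus ?thesis using N4 by (simp add: mult_less_cancel_left)
qed

lemma overlap:
  assumes xX: "x \<in> X" and hi: "real (dg x) > (1-\<epsilon>) * real D"
  shows "real (card (NB x \<inter> NB z)) \<ge> (1 - 3*\<epsilon>) * real D"
proof -
  from near[OF xX hi] show ?thesis
  proof
    assume "x = z"
    hence "card (NB x \<inter> NB z) = D" using zD unfolding degree_def by simp
    thus ?thesis using eps0 by (simp add: algebra_simps)
  next
    assume "\<exists>y. E z y \<and> E x y"
    then obtain y where ezy: "E z y" and exy: "E x y" by blast
    obtain cs where eycs: "E y cs" and covx: "cov x cs" and covz: "cov z cs"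
      using pick2[OF exy ezy] by blast
    have yY: "y \<in> Y" using ezy zX bip unfolding bipartite_graph_def by blast
    have csX: "cs \<in> X" using eycs yY bip unfolding bipartite_graph_def by blast
    have dcs: "dg cs \<le> D" using Dmax csX by blast
    have dxD: "dg x \<le> D" using Dmax xX by blast
    have i3: "card (NB x \<inter> NB cs) + card (NB z \<inter> NB cs) \<le> card (NB cs) + card (NB x \<inter> NB z)"
      using inter3 finN by blast
    have s1: "dg x = card (NB x \<inter> NB cs) + card (NB x - NB cs)" by (rule card_split)
    have s2: "dg z = card (NB z \<inter> NB cs) + card (NB z - NB cs)" by (rule card_split)
    have "card (NB cs) = dg cs" unfolding degree_def ..
    hence nat1: "dg x \<le> card (NB x \<inter> NB z) + card (NB x - NB cs) + card (NB z - NB cs)"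
      using i3 s1 s2 dcs zD by linarith
    have a1: "real N * real (card (NB x - NB cs)) < real D"
      using covR[OF covx] dxD by (meson less_le_trans of_nat_le_iff)
    have a2: "real N * real (card (NB z - NB cs)) < real D"
      using covR[OF covz] zD by simp
    have "real (card (NB x - NB cs)) < \<epsilon> * real D" by (rule small_part[OF a1])
    moreover have "real (card (NB z - NB cs)) < \<epsilon> * real D" by (rule small_part[OF a2])
    moreover have "real (dg x) \<le> real (card (NB x \<inter> NB z)) + real (card (NB x - NB cs)) + real (card (NB z - NB cs))"
      using nat1 by linarith
    ultimately have "real (card (NB x \<inter> NB z)) > (1-\<epsilon>) * real D - 2 * (\<epsilon> * real D)" using hi by linarith
    thus ?thesis by (simp add: algebra_simps)
  qed
qed

lemma final:
  assumes xX: "x \<in> X" and hi: "real (dg x) > (1-\<epsilon>) * real D"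
    and xX': "x' \<in> X" and hi': "real (dg x') > (1-\<epsilon>) * real D"
  shows "real (card (NB x \<inter> NB x')) \<ge> (1 - 10*\<epsilon>) * real D"
proof -
  have i3: "card (NB x \<inter> NB z) + card (NB x' \<inter> NB z) \<le> card (NB z) + card (NB x \<inter> NB x')"
    using inter3 finN by blast
  have "card (NB z) = D" using zD unfolding degree_def .
  hence "real (card (NB x \<inter> NB z)) + real (card (NB x' \<inter> NB z)) \<le> real D + real (card (NB x \<inter> NB x'))"
    using i3 by linarith
  moreover have "real (card (NB x \<inter> NB z)) \<ge> (1 - 3*\<epsilon>) * real D" by (rule overlap[OF xX hi])
  moreover have "real (card (NB x' \<inter> NB z)) \<ge> (1 - 3*\<epsilon>) * real D" by (rule overlap[OF xX' hi'])
  moreover have "\<epsilon> * real D \<ge> 0" using eps0 by simp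
  ultimately show ?thesis by (simp add: algebra_simps)
qed

end

definition Cn :: "nat \<Rightarrow> nat \<Rightarrow> nat" where
  "Cn t N = N*(2*t+1) + 2*(t*(4*N)^t + t) + 3"

definition Cf :: "nat \<Rightarrow> real \<Rightarrow> real" where
  "Cf t \<epsilon> = real (Cn t (nat \<lceil>1/\<epsilon>\<rceil> + 4))"

theorem mainTheorem13:
  shows "\<exists>C :: nat \<Rightarrow> real \<Rightarrow> real. \<forall>t::nat. \<forall>\<epsilon>::real. \<forall>(X::nat set) (Y::nat set) (E::nat \<Rightarrow> nat \<Rightarrow> bool) (n::nat).
     t > 0 \<longrightarrow> 0 < \<epsilon> \<longrightarrow> \<epsilon> < 1 \<longrightarrow>
     bipartite_graph X Y E \<longrightarrow> card X = n \<longrightarrow> card Y = n \<longrightarrow>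
     connected_graph (X \<union> Y) E \<longrightarrow>
     real (min_degree (X \<union> Y) E) \<ge> 3 * C t \<epsilon> \<longrightarrow>
     \<not> has_induced_biclaw (X \<union> Y) E t t \<longrightarrow>
     (\<forall>x \<in> X - U_set (X \<union> Y) E X \<epsilon>. \<forall>x' \<in> X - U_set (X \<union> Y) E X \<epsilon>.
        real (card (nbhd (X \<union> Y) E x \<inter> nbhd (X \<union> Y) E x'))
          \<ge> (1 - 10 * \<epsilon>) * real (max_degree_on (X \<union> Y) E X))"
proof (rule exI[of _ Cf], intro allI impI ballI)
  fix t :: nat and \<epsilon> :: real and X Y :: "nat set" and E :: "nat \<Rightarrow> nat \<Rightarrow> bool" and n :: nat and x x'
  assume tpos: "t > 0" and eps0: "0 < \<epsilon>" and eps1: "\<epsilon> < 1" and bip: "bipartite_graph X Y E"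
    and cX: "card X = n" and cY: "card Y = n" and conn: "connected_graph (X \<union> Y) E"
    and md: "real (min_degree (X \<union> Y) E) \<ge> 3 * Cf t \<epsilon>"
    and nob: "\<not> has_induced_biclaw (X \<union> Y) E t t"
    and xU: "x \<in> X - U_set (X \<union> Y) E X \<epsilon>" and xU': "x' \<in> X - U_set (X \<union> Y) E X \<epsilon>"
  define D where "D = max_degree_on (X \<union> Y) E X"
  show "real (card (nbhd (X \<union> Y) E x \<inter> nbhd (X \<union> Y) E x')) \<ge> (1 - 10 * \<epsilon>) * real (max_degree_on (X \<union> Y) E X)"
  proof (cases "\<epsilon> \<ge> 1/10")
    case True
    hence "(1 - 10 * \<epsilon>) * real D \<le> 0" by (simp add: mult_nonpos_nonneg)
    thus ?thesis unfolding D_def by (meson of_nat_0_le_iff order_trans)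
  next
    case False
    hence eps10: "\<epsilon> < 1/10" by simp
    define N where "N = nat \<lceil>1/\<epsilon>\<rceil> + 4"
    define K where "K = t * (4*N)^t"
    have N4: "N \<ge> 4" unfolding N_def by simp
    have Neps: "real N * \<epsilon> \<ge> 1"
    proof -
      have "real N \<ge> 1/\<epsilon>" unfolding N_def by linarith
      hence "real N * \<epsilon> \<ge> (1/\<epsilon>) * \<epsilon>" by (rule mult_right_mono) (use eps0 in simp)
      thus ?thesis using eps0 by simp
    qed
    have xX: "x \<in> X" using xU by blast
    have finX: "finite X" using bip unfolding bipartite_graph_def by blast
    have finV: "finite (X \<union> Y)" using bip unfolding bipartite_graph_def by blast
    have Xne: "X \<noteq> {}" using xX by blast
    have "D \<in> degree (X \<union> Y) E ` X" unfolding D_def max_degree_on_def using finX Xne by simp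
    then obtain z where zX: "z \<in> X" and zD: "degree (X \<union> Y) E z = D" by auto
    have Dmax: "\<forall>u\<in>X. degree (X \<union> Y) E u \<le> D" unfolding D_def max_degree_on_def using finX by simp
    have mind: "\<forall>v\<in>X \<union> Y. N*(2*t+1) + 2*(K+t) + 3 \<le> degree (X \<union> Y) E v"
    proof
      fix v assume v: "v \<in> X \<union> Y"
      have "min_degree (X \<union> Y) E \<le> degree (X \<union> Y) E v" unfolding min_degree_def using finV v by simp
      moreover have "real (Cn t N) \<le> real (min_degree (X \<union> Y) E)"
      proof -
        have "Cf t \<epsilon> = real (Cn t N)" unfolding Cf_def N_def ..
        moreover have "real (Cn t N) \<ge> 0" by simp
        ultimately show ?thesis using md by linarith
      qed
      ultimately have "Cn t N \<le> degree (X \<union> Y) E v" by linarith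
      thus "N*(2*t+1) + 2*(K+t) + 3 \<le> degree (X \<union> Y) E v" unfolding Cn_def K_def .
    qed
    interpret mgraph X Y E t z N K D \<epsilon>
    proof (unfold_locales)
    qed (use bip nob tpos zX conn N4 K_def mind Dmax zD eps0 eps10 Neps in auto)
    have hi: "real (degree (X \<union> Y) E x) > (1-\<epsilon>) * real D"
      using xU unfolding U_set_def D_def by auto
    have hi': "real (degree (X \<union> Y) E x') > (1-\<epsilon>) * real D"
      using xU' unfolding U_set_def D_def by auto
    have xX': "x' \<in> X" using xU' by blast
    show ?thesis using final[OF xX hi xX' hi'] unfolding D_def .
  qed
qed

end
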